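(* Let $J\ge1$ and $n\ge J^2$, and let $z_1,\dots,z_n\in\mathbb{R}$ be distinct. For $K\in\{1,\dots,J\}$ let $T_K=\{(\tau,\mu)\in\mathbb{R}^K\times\mathbb{R}^K:\tau_j>0,\ \sum_{j=1}^K\tau_j=1,\ \mu_1<\dots<\mu_K\}$. Let $(\tau,\mu)\in T_{K_1}$ and $(\varsigma,\nu)\in T_{K_2}$ with $K_1,K_2\le J$. If for every $i=1,\dots,n$ $$\frac{\sum_{k=1}^{K_1}\tau_k(z_i-\mu_k)\phi(z_i-\mu_k)}{\sum_{k=1}^{K_1}\tau_k\phi(z_i-\mu_k)}=\frac{\sum_{j=1}^{K_2}\varsigma_j(z_i-\nu_j)\phi(z_i-\nu_j)}{\sum_{j=1}^{K_2}\varsigma_j\phi(z_i-\nu_j)},$$ then $K_1=K_2$, $\tau=\varsigma$ and $\mu=\nu$.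
   Context: $\phi$ denotes the standard normal density. The displayed equality is equivalent to $\frac{\partial}{\partial z_i}\big[Q(\tau,\mu,z)-Q(\varsigma,\nu,z)\big]=0$, where $Q(\tau,\mu,z)=-\sum_{i=1}^n\log\sum_{k}\tau_k\phi(z_i-\mu_k)$. *)

theory Defs
  imports "HOL-Analysis.Analysis"
begin

definition std_normal_density :: "real \<Rightarrow> real" where
  "std_normal_density x = exp (- (x^2) / 2) / sqrt (2 * pi)"

text \<open>Parameter set T_K: vectors in R^K represented as functions on indices 0..K-1.\<close>
definition T_set :: "nat \<Rightarrow> ((nat \<Rightarrow> real) \<times> (nat \<Rightarrow> real)) set" where
  "T_set K = {(tau, mu). (\<forall>j<K. tau j > 0) \<and> (\<Sum>j<K. tau j) = 1 \<and>
                         (\<forall>j k. j < k \<and> k < K \<longrightarrow> mu j < mu k)}"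

definition mix_ratio :: "nat \<Rightarrow> (nat \<Rightarrow> real) \<Rightarrow> (nat \<Rightarrow> real) \<Rightarrow> real \<Rightarrow> real" where
  "mix_ratio K tau mu z =
     (\<Sum>k<K. tau k * (z - mu k) * std_normal_density (z - mu k)) /
     (\<Sum>k<K. tau k * std_normal_density (z - mu k))"

end

theory Submission
  imports Defs
begin

lemma rolle_count:
  fixes f f' :: "real \<Rightarrow> real"
  assumes der: "\<And>x. (f has_real_derivative f' x) (at x)"
  shows "finite Z \<Longrightarrow> \<forall>z\<in>Z. f z = 0 \<Longrightarrow>
    \<exists>W. finite W \<and> card W = card Z - 1 \<and> (\<forall>w\<in>W. f' w = 0) \<and> (\<forall>w\<in>W. w < Max Z)"
proof (induction "card Z" arbitrary: Z rule: less_induct)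
  case less
  show ?case
  proof (cases "card Z \<le> 1")
    case True
    then show ?thesis by (intro exI[of _ "{}"]) auto
  next
    case False
    define b where "b = Max Z"
    define Z' where "Z' = Z - {b}"
    have Zne: "Z \<noteq> {}" using False by auto
    have bZ: "b \<in> Z" using less(2) Zne b_def by simp
    have cZ': "card Z' = card Z - 1" using bZ less(2) Z'_def by simp
    have Z'ne: "Z' \<noteq> {}" using cZ' False by (metis One_nat_def card.empty diff_is_0_eq less_one linorder_not_less not_less_eq_eq)
    have finZ': "finite Z'" using less(2) Z'_def by simp
    define a where "a = Max Z'"
    have aZ': "a \<in> Z'" using finZ' Z'ne a_def by simp
    have ab: "a < b"
      using aZ' Z'_def b_def less(2) by (metis DiffD1 DiffD2 Max_ge insertI1 order_le_less)
    obtain W' where W': "finite W'" "card W' = card Z' - 1" "\<forall>w\<in>W'. f' w = 0" "\<forall>w\<in>W'. w < a"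
      using less(1)[of Z'] cZ' False finZ' less(3) Z'_def a_def by force
    have "\<exists>x. a < x \<and> x < b \<and> DERIV f x :> 0"
    proof (rule Rolle[OF ab])
      show "f a = f b" using less(3) aZ' bZ Z'_def by auto
      show "continuous_on {a..b} f"
        by (meson DERIV_continuous continuous_at_imp_continuous_on der)
      show "\<And>x. a < x \<Longrightarrow> x < b \<Longrightarrow> f differentiable at x"
        using der real_differentiable_def by blast
    qed
    then obtain x where x: "a < x" "x < b" "DERIV f x :> 0" by blast
    have fx: "f' x = 0" using DERIV_unique[OF der x(3)] .
    have "x \<notin> W'" using W'(4) x(1) by auto
    then show ?thesis
      using W' x fx cZ' False b_def
      by (intro exI[of _ "insert x W'"]) (auto)
  qed
qed

lemma exp_sum_zeros:
  fixes S :: "real set"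
  assumes "finite S"
  shows "finite Z \<Longrightarrow> card S \<le> card Z \<Longrightarrow> \<forall>z\<in>Z. (\<Sum>e\<in>S. c e * exp (e*z)) = 0
     \<Longrightarrow> \<forall>e\<in>S. c e = 0"
  using assms
proof (induction S arbitrary: Z c rule: finite_induct)
  case empty
  then show ?case by simp
next
  case (insert x F)
  define g where "g z = c x + (\<Sum>e\<in>F. c e * exp ((e-x)*z))" for z
  define g' where "g' z = (\<Sum>e\<in>F. c e * (e-x) * exp ((e-x)*z))" for z
  have gz: "g z = exp (-(x*z)) * (\<Sum>e\<in>insert x F. c e * exp (e*z))" for z
    using insert(1,2) unfolding g_def
    by (simp add: sum_distrib_left algebra_simps flip: exp_add)
  have gZ: "\<forall>z\<in>Z. g z = 0" using gz insert(6) by simp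
  have der: "(g has_real_derivative g' x') (at x')" for x'
    unfolding g_def g'_def
    by (auto intro!: derivative_eq_intros sum.cong simp: algebra_simps)
  obtain W where W: "finite W" "card W = card Z - 1" "\<forall>w\<in>W. g' w = 0"
    using rolle_count[OF der, of Z] insert(4) gZ by blast
  have W0: "\<forall>w\<in>W. (\<Sum>e\<in>F. (c e * (e-x)) * exp (e*w)) = 0"
  proof
    fix w assume "w \<in> W"
    have "(\<Sum>e\<in>F. (c e * (e-x)) * exp (e*w)) = exp (x*w) * g' w"
      unfolding g'_def by (simp add: sum_distrib_left algebra_simps flip: exp_add)
    then show "(\<Sum>e\<in>F. (c e * (e-x)) * exp (e*w)) = 0" using W(3) \<open>w\<in>W\<close> by simp
  qed
  have "card F \<le> card W" using W(2) insert(1,2,5) by simp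
  then have F0: "\<forall>e\<in>F. c e * (e - x) = 0"
    using insert(3)[OF W(1) _ W0] by blast
  then have F0': "\<forall>e\<in>F. c e = 0" using insert(2) by fastforce
  have "Z \<noteq> {}" using insert(1,2,5) by auto
  then obtain z0 where "z0 \<in> Z" by blast
  then have "c x * exp (x*z0) = 0" using insert(6) insert(1,2) F0' by auto
  then have "c x = 0" by simp
  then show ?case using F0' by simp
qed


abbreviation "\<phi> \<equiv> std_normal_density"

lemma phi_pos: "\<phi> x > 0" unfolding std_normal_density_def by simp

lemma phi_prod: "\<phi> (z - m) * \<phi> (z - v) =
   exp (-(z^2)) / (2*pi) * exp (-(m^2+v^2)/2) * exp ((m+v)*z)"
proof -
  have s: "sqrt (2*pi) * sqrt (2*pi) = 2*pi" by simp
  have e: "-((z-m)^2)/2 + -((z-v)^2)/2 = -(z^2) + -(m^2+v^2)/2 + (m+v)*z"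
    by (simp add: power2_eq_square field_simps)
  have "\<phi> (z - m) * \<phi> (z - v) = exp (-((z-m)^2)/2 + -((z-v)^2)/2) / (sqrt (2*pi) * sqrt (2*pi))"
    unfolding std_normal_density_def exp_add by simp
  also have "\<dots> = exp (-(z^2) + -(m^2+v^2)/2 + (m+v)*z) / (2*pi)" using s e by simp
  also have "\<dots> = exp (-(z^2)) / (2*pi) * exp (-(m^2+v^2)/2) * exp ((m+v)*z)"
    unfolding exp_add by simp
  finally show ?thesis .
qed

lemma phi_deriv: "((\<lambda>z. \<phi> (z - m)) has_real_derivative (-(x-m) * \<phi> (x-m))) (at x)"
proof -
  define c where "c = sqrt (2*pi)"
  have "c > 0" unfolding c_def by simp
  have "((\<lambda>z. exp (-((z-m)^2)/2) / c) has_real_derivative (exp (-((x-m)^2)/2) * (-(2*(x-m))/2)) / c) (at x)"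
    using \<open>c > 0\<close> by (auto intro!: derivative_eq_intros simp: field_simps)
  moreover have "(exp (-((x-m)^2)/2) * (-(2*(x-m))/2)) / c = -(x-m) * (exp (-((x-m)^2)/2) / c)"
    using \<open>c > 0\<close> by (simp add: field_simps)
  ultimately show ?thesis unfolding std_normal_density_def c_def by simp
qed

lemma phi_exp: "\<phi> (z - m) = exp (-(z^2)/2) / sqrt (2*pi) * (exp (-(m^2)/2) * exp (m*z))"
proof -
  have "-((z-m)^2)/2 = -(z^2)/2 + (-(m^2)/2 + m*z)" by (simp add: power2_eq_square field_simps)
  then have "exp (-((z-m)^2)/2) = exp (-(z^2)/2) * (exp (-(m^2)/2) * exp (m*z))"
    unfolding exp_add[symmetric] by simp
  then show ?thesis unfolding std_normal_density_def by simp
qed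

definition Dm :: "nat \<Rightarrow> (nat \<Rightarrow> real) \<Rightarrow> (nat \<Rightarrow> real) \<Rightarrow> real \<Rightarrow> real" where
  "Dm K t m z = (\<Sum>k<K. t k * \<phi> (z - m k))"
definition Nm :: "nat \<Rightarrow> (nat \<Rightarrow> real) \<Rightarrow> (nat \<Rightarrow> real) \<Rightarrow> real \<Rightarrow> real" where
  "Nm K t m z = (\<Sum>k<K. t k * (z - m k) * \<phi> (z - m k))"

lemma mix_ratio_eq: "mix_ratio K t m z = Nm K t m z / Dm K t m z"
  unfolding mix_ratio_def Nm_def Dm_def ..

lemma Dm_pos: "\<forall>j<K. t j > 0 \<Longrightarrow> 1 \<le> K \<Longrightarrow> Dm K t m z > 0"
  unfolding Dm_def by (intro sum_pos) (auto intro: mult_pos_pos phi_pos simp: lessThan_empty_iff)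

lemma Dm_deriv: "(Dm K t m has_real_derivative - Nm K t m z) (at z)"
proof -
  have "((\<lambda>x. \<Sum>k<K. t k * \<phi> (x - m k)) has_real_derivative (\<Sum>k<K. t k * (-(z - m k) * \<phi> (z - m k)))) (at z)"
    by (intro DERIV_sum DERIV_cmult phi_deriv)
  moreover have "(\<Sum>k<K. t k * (-(z - m k) * \<phi> (z - m k))) = - Nm K t m z"
    unfolding Nm_def by (simp add: sum_negf[symmetric] algebra_simps)
  ultimately show ?thesis unfolding Dm_def[abs_def] by simp
qed

lemma Dm_exp: "Dm K t m z = exp (-(z^2)/2) / sqrt (2*pi) * (\<Sum>k<K. (t k * exp (-((m k)^2)/2)) * exp (m k * z))"
  unfolding Dm_def phi_exp by (simp add: sum_distrib_left algebra_simps)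

lemma cross:
  "Nm K1 t m z * Dm K2 s v z - Nm K2 s v z * Dm K1 t m z =
   exp (-(z^2)) / (2*pi) * (\<Sum>p\<in>{..<K1}\<times>{..<K2}.
     (t (fst p) * s (snd p) * (v (snd p) - m (fst p)) * exp (-((m (fst p))^2 + (v (snd p))^2)/2))
       * exp ((m (fst p) + v (snd p)) * z))"
proof -
  have "Nm K1 t m z * Dm K2 s v z - Nm K2 s v z * Dm K1 t m z =
    (\<Sum>p\<in>{..<K1}\<times>{..<K2}. t (fst p) * (z - m (fst p)) * \<phi> (z - m (fst p)) * (s (snd p) * \<phi> (z - v (snd p)))
       - s (snd p) * (z - v (snd p)) * \<phi> (z - v (snd p)) * (t (fst p) * \<phi> (z - m (fst p))))"
  proof -
    have 1: "Nm K1 t m z * Dm K2 s v z = (\<Sum>p\<in>{..<K1}\<times>{..<K2}. t (fst p) * (z - m (fst p)) * \<phi> (z - m (fst p)) * (s (snd p) * \<phi> (z - v (snd p))))"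
      unfolding Nm_def Dm_def sum_product by (simp add: sum.cartesian_product case_prod_unfold)
    have 2: "Nm K2 s v z * Dm K1 t m z = (\<Sum>p\<in>{..<K1}\<times>{..<K2}. s (snd p) * (z - v (snd p)) * \<phi> (z - v (snd p)) * (t (fst p) * \<phi> (z - m (fst p))))"
      unfolding Nm_def Dm_def sum_product
      by (subst sum.swap) (simp add: sum.cartesian_product case_prod_unfold)
    show ?thesis unfolding 1 2 sum_subtractf ..
  qed
  also have "\<dots> = (\<Sum>p\<in>{..<K1}\<times>{..<K2}. exp (-(z^2)) / (2*pi) * ((t (fst p) * s (snd p) * (v (snd p) - m (fst p)) * exp (-((m (fst p))^2 + (v (snd p))^2)/2))
       * exp ((m (fst p) + v (snd p)) * z)))"
  proof (rule sum.cong[OF refl])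
    fix p :: "nat \<times> nat"
    obtain k j where p: "p = (k,j)" by force
    have "t k * (z - m k) * \<phi> (z - m k) * (s j * \<phi> (z - v j)) - s j * (z - v j) * \<phi> (z - v j) * (t k * \<phi> (z - m k))
       = t k * s j * (v j - m k) * (\<phi> (z - m k) * \<phi> (z - v j))" by (simp add: algebra_simps)
    also have "\<dots> = exp (-(z^2)) / (2*pi) * ((t k * s j * (v j - m k) * exp (-((m k)^2 + (v j)^2)/2)) * exp ((m k + v j) * z))"
      unfolding phi_prod by simp
    finally show "t (fst p) * (z - m (fst p)) * \<phi> (z - m (fst p)) * (s (snd p) * \<phi> (z - v (snd p)))
       - s (snd p) * (z - v (snd p)) * \<phi> (z - v (snd p)) * (t (fst p) * \<phi> (z - m (fst p))) =
       exp (-(z^2)) / (2*pi) * ((t (fst p) * s (snd p) * (v (snd p) - m (fst p)) * exp (-((m (fst p))^2 + (v (snd p))^2)/2))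
       * exp ((m (fst p) + v (snd p)) * z))" using p by simp
  qed
  finally show ?thesis by (simp add: sum_distrib_left)
qed

lemma regroup:
  fixes w :: "'a \<Rightarrow> real" and f :: "'b \<Rightarrow> real"
  assumes "finite I" "finite S" "h ` I \<subseteq> S"
  shows "(\<Sum>e\<in>S. (\<Sum>i\<in>{i\<in>I. h i = e}. w i) * f e) = (\<Sum>i\<in>I. w i * f (h i))"
proof -
  have "(\<Sum>e\<in>S. (\<Sum>i\<in>{i\<in>I. h i = e}. w i) * f e) = (\<Sum>e\<in>S. \<Sum>i\<in>{i\<in>I. h i = e}. w i * f e)"
    by (rule sum.cong[OF refl]) (rule sum_distrib_right)
  also have "\<dots> = (\<Sum>i\<in>I. \<Sum>e\<in>{e\<in>S. h i = e}. w i * f e)"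
    using sum.swap_restrict[OF assms(2,1), of "\<lambda>e i. w i * f e" "\<lambda>e i. h i = e"] by simp
  also have "\<dots> = (\<Sum>i\<in>I. w i * f (h i))"
  proof (rule sum.cong[OF refl])
    fix i assume "i \<in> I"
    then have "{e\<in>S. h i = e} = {h i}" using assms(3) by auto
    then show "(\<Sum>e\<in>{e\<in>S. h i = e}. w i * f e) = w i * f (h i)" by simp
  qed
  finally show ?thesis .
qed

lemma below_card:
  fixes \<mu> :: "nat \<Rightarrow> real"
  assumes mono: "\<forall>j k. j<k \<and> k<K \<longrightarrow> \<mu> j < \<mu> k" and "k < K"
  shows "card {x\<in>\<mu>`{..<K}. x < \<mu> k} = k"
proof -
  have "{x\<in>\<mu>`{..<K}. x < \<mu> k} = \<mu>`{..<k}"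
  proof
    show "{x\<in>\<mu>`{..<K}. x < \<mu> k} \<subseteq> \<mu>`{..<k}"
    proof
      fix x assume "x \<in> {x\<in>\<mu>`{..<K}. x < \<mu> k}"
      then obtain i where i: "i < K" "x = \<mu> i" "\<mu> i < \<mu> k" by auto
      have "i < k"
      proof (rule ccontr)
        assume "\<not> i < k"
        then have "k = i \<or> k < i" by auto
        then show False using mono i assms(2) by (metis less_asym order_less_irrefl)
      qed
      then show "x \<in> \<mu>`{..<k}" using i by auto
    qed
    show "\<mu>`{..<k} \<subseteq> {x\<in>\<mu>`{..<K}. x < \<mu> k}" using mono assms(2) by auto
  qed
  moreover have "inj_on \<mu> {..<k}"
    unfolding inj_on_def using mono assms(2)
    by (metis lessThan_iff linorder_neqE_nat order_less_irrefl order_less_trans)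
  ultimately show ?thesis by (simp add: card_image)
qed

lemma sorted_eq:
  fixes \<mu> \<nu> :: "nat \<Rightarrow> real"
  assumes m: "\<forall>j k. j<k \<and> k<K1 \<longrightarrow> \<mu> j < \<mu> k" and n: "\<forall>j k. j<k \<and> k<K2 \<longrightarrow> \<nu> j < \<nu> k"
    and eq: "\<mu>`{..<K1} = \<nu>`{..<K2}"
  shows "K1 = K2 \<and> (\<forall>k<K1. \<mu> k = \<nu> k)"
proof -
  have A: "k < K2 \<and> \<mu> k = \<nu> k" if "k < K1" for k
  proof -
    have "\<mu> k \<in> \<nu>`{..<K2}" using eq that by blast
    then obtain j where j: "j < K2" "\<mu> k = \<nu> j" by auto
    have "k = card {x\<in>\<mu>`{..<K1}. x < \<mu> k}" using below_card[OF m that] by simp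
    also have "\<dots> = card {x\<in>\<nu>`{..<K2}. x < \<nu> j}" using eq j by simp
    also have "\<dots> = j" using below_card[OF n j(1)] .
    finally show ?thesis using j by simp
  qed
  have B: "k < K1" if "k < K2" for k
  proof -
    have "\<nu> k \<in> \<mu>`{..<K1}" using eq that by blast
    then obtain j where j: "j < K1" "\<nu> k = \<mu> j" by auto
    have "k = card {x\<in>\<nu>`{..<K2}. x < \<nu> k}" using below_card[OF n that] by simp
    also have "\<dots> = card {x\<in>\<mu>`{..<K1}. x < \<mu> j}" using eq j by simp
    also have "\<dots> = j" using below_card[OF m j(1)] .
    finally show ?thesis using j by simp
  qed
  have "K1 \<le> K2" using A by (metis not_le order_refl less_le_trans)
  moreover have "K2 \<le> K1" using B by (metis not_le order_refl less_le_trans)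
  ultimately show ?thesis using A by simp
qed


lemma smono_inj: "\<forall>j k. j<k \<and> k<K \<longrightarrow> (m::nat\<Rightarrow>real) j < m k \<Longrightarrow> i < K \<Longrightarrow> k < K \<Longrightarrow> m i = m k \<Longrightarrow> i = k"
  by (metis linorder_neqE_nat order_less_irrefl)

theorem mainTheorem7:
  fixes J n K1 K2 :: nat and z :: "nat \<Rightarrow> real"
    and tau mu sigma nu :: "nat \<Rightarrow> real"
  assumes "J \<ge> 1" and "n \<ge> J^2"
    and "inj_on z {..<n}"
    and "1 \<le> K1" and "K1 \<le> J" and "1 \<le> K2" and "K2 \<le> J"
    and "(tau, mu) \<in> T_set K1" and "(sigma, nu) \<in> T_set K2"
    and "\<forall>i<n. mix_ratio K1 tau mu (z i) = mix_ratio K2 sigma nu (z i)"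
  shows "K1 = K2 \<and> (\<forall>k<K1. tau k = sigma k \<and> mu k = nu k)"
proof -
  from assms(8) have tpos: "\<forall>j<K1. tau j > 0" and tsum: "(\<Sum>j<K1. tau j) = 1"
    and mmono: "\<forall>j k. j<k \<and> k<K1 \<longrightarrow> mu j < mu k" by (auto simp: T_set_def)
  from assms(9) have spos: "\<forall>j<K2. sigma j > 0" and ssum: "(\<Sum>j<K2. sigma j) = 1"
    and nmono: "\<forall>j k. j<k \<and> k<K2 \<longrightarrow> nu j < nu k" by (auto simp: T_set_def)
  have D1pos: "Dm K1 tau mu x > 0" for x using Dm_pos tpos assms(4) by blast
  have D2pos: "Dm K2 sigma nu x > 0" for x using Dm_pos spos assms(6) by blast
  define I where "I = {..<K1} \<times> {..<K2}"
  define w where "w p = tau (fst p) * sigma (snd p) * (nu (snd p) - mu (fst p)) * exp (-((mu (fst p))^2 + (nu (snd p))^2)/2)" for p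
  define h where "h p = mu (fst p) + nu (snd p)" for p
  define P where "P x = Nm K1 tau mu x * Dm K2 sigma nu x - Nm K2 sigma nu x * Dm K1 tau mu x" for x
  have Pform: "P x = exp (-(x^2)) / (2*pi) * (\<Sum>p\<in>I. w p * exp (h p * x))" for x
    unfolding P_def w_def h_def I_def by (rule cross)
  have Pzi: "P (z i) = 0" if "i < n" for i
  proof -
    have "Nm K1 tau mu (z i) / Dm K1 tau mu (z i) = Nm K2 sigma nu (z i) / Dm K2 sigma nu (z i)"
      using assms(10) that by (simp add: mix_ratio_eq)
    then show ?thesis unfolding P_def
      using D1pos[of "z i"] D2pos[of "z i"] by (simp add: frac_eq_eq)
  qed
  have G0: "(\<Sum>p\<in>I. w p * exp (h p * z i)) = 0" if "i < n" for i
    using Pzi[OF that] Pform[of "z i"] by simp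
  define S where "S = h ` I"
  define c where "c e = (\<Sum>p\<in>{p\<in>I. h p = e}. w p)" for e
  have finI: "finite I" unfolding I_def by simp
  have finS: "finite S" unfolding S_def using finI by simp
  have regr: "(\<Sum>e\<in>S. c e * exp (e*x)) = (\<Sum>p\<in>I. w p * exp (h p * x))" for x
    using regroup[OF finI finS, of h w "\<lambda>e. exp (e*x)"] unfolding c_def S_def by (simp add: mult.commute)
  define Z where "Z = z ` {..<n}"
  have cZ: "card Z = n" unfolding Z_def using assms(3) by (simp add: card_image)
  have "card S \<le> card I" unfolding S_def using finI by (rule card_image_le)
  also have "\<dots> = K1 * K2" unfolding I_def by (simp add: card_cartesian_product)
  also have "\<dots> \<le> J * J" using assms(5,7) by (rule mult_le_mono)
  also have "\<dots> \<le> n" using assms(2) by (simp add: power2_eq_square)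
  finally have cS: "card S \<le> card Z" using cZ by simp
  have "\<forall>x\<in>Z. (\<Sum>e\<in>S. c e * exp (e*x)) = 0"
    unfolding Z_def regr using G0 by auto
  then have c0: "\<forall>e\<in>S. c e = 0"
    using exp_sum_zeros[OF finS, of Z c] cS unfolding Z_def by simp
  have P0: "P x = 0" for x
    using Pform[of x] regr[of x, symmetric] c0 by simp
  define R where "R x = Dm K1 tau mu x / Dm K2 sigma nu x" for x
  have Rd: "DERIV R x :> 0" for x
  proof -
    have "DERIV R x :> ((- Nm K1 tau mu x) * Dm K2 sigma nu x - Dm K1 tau mu x * (- Nm K2 sigma nu x)) / (Dm K2 sigma nu x * Dm K2 sigma nu x)"
      unfolding R_def[abs_def]
      by (rule DERIV_divide[OF Dm_deriv Dm_deriv]) (use D2pos[of x] in simp)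
    moreover have "(- Nm K1 tau mu x) * Dm K2 sigma nu x - Dm K1 tau mu x * (- Nm K2 sigma nu x) = - P x"
      unfolding P_def by (simp add: algebra_simps)
    ultimately show ?thesis using P0[of x] by simp
  qed
  define C where "C = R 0"
  have Cpos: "C > 0" unfolding C_def R_def using D1pos D2pos by simp
  have D12: "Dm K1 tau mu x = C * Dm K2 sigma nu x" for x
  proof -
    have "R x = C" unfolding C_def using DERIV_isconst_all Rd by blast
    then show ?thesis unfolding R_def using D2pos[of x] by (simp add: field_simps)
  qed
  define a where "a k = tau k * exp (-((mu k)^2)/2)" for k
  define b where "b k = sigma k * exp (-((nu k)^2)/2)" for k
  have E: "(\<Sum>k<K1. a k * exp (mu k * x)) - C * (\<Sum>k<K2. b k * exp (nu k * x)) = 0" for x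
  proof -
    have pos: "exp (-(x^2)/2) / sqrt (2*pi) > 0" by simp
    have "exp (-(x^2)/2) / sqrt (2*pi) * (\<Sum>k<K1. a k * exp (mu k * x)) =
          exp (-(x^2)/2) / sqrt (2*pi) * (C * (\<Sum>k<K2. b k * exp (nu k * x)))"
      using D12[of x] unfolding Dm_exp a_def b_def by (simp add: algebra_simps)
    then show ?thesis using pos by simp
  qed
  define S' where "S' = mu ` {..<K1} \<union> nu ` {..<K2}"
  define A where "A e = (\<Sum>k\<in>{k\<in>{..<K1}. mu k = e}. a k)" for e
  define B where "B e = (\<Sum>k\<in>{k\<in>{..<K2}. nu k = e}. b k)" for e
  define d where "d e = A e - C * B e" for e
  have finS': "finite S'" unfolding S'_def by simp
  have dsum: "(\<Sum>e\<in>S'. d e * exp (e*x)) = 0" for x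
  proof -
    have 1: "(\<Sum>e\<in>S'. A e * exp (e*x)) = (\<Sum>k<K1. a k * exp (mu k * x))"
      unfolding A_def using regroup[OF _ finS', of "{..<K1}" mu a "\<lambda>e. exp (e*x)"]
      by (simp add: S'_def mult.commute)
    have 2: "(\<Sum>e\<in>S'. B e * exp (e*x)) = (\<Sum>k<K2. b k * exp (nu k * x))"
      unfolding B_def using regroup[OF _ finS', of "{..<K2}" nu b "\<lambda>e. exp (e*x)"]
      by (simp add: S'_def mult.commute)
    have "(\<Sum>e\<in>S'. d e * exp (e*x)) = (\<Sum>e\<in>S'. A e * exp (e*x)) - C * (\<Sum>e\<in>S'. B e * exp (e*x))"
      unfolding d_def by (simp add: sum_subtractf sum_distrib_left algebra_simps)
    then show ?thesis using 1 2 E[of x] by simp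
  qed
  define Z' where "Z' = real ` {..<card S'}"
  have cZ': "card Z' = card S'" unfolding Z'_def by (simp add: card_image)
  have d0: "\<forall>e\<in>S'. d e = 0"
    using exp_sum_zeros[OF finS', of Z' d] cZ' dsum unfolding Z'_def by simp
  have Amu: "A (mu k) = a k" if "k < K1" for k
  proof -
    have "{k'\<in>{..<K1}. mu k' = mu k} = {k}" using smono_inj[OF mmono _ that] that by auto
    then show ?thesis unfolding A_def by simp
  qed
  have Bnu: "B (nu k) = b k" if "k < K2" for k
  proof -
    have "{k'\<in>{..<K2}. nu k' = nu k} = {k}" using smono_inj[OF nmono _ that] that by auto
    then show ?thesis unfolding B_def by simp
  qed
  have apos: "a k > 0" if "k < K1" for k using tpos that unfolding a_def by simp
  have bpos: "b k > 0" if "k < K2" for k using spos that unfolding b_def by simp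
  have sub1: "mu k \<in> nu ` {..<K2}" if "k < K1" for k
  proof (rule ccontr)
    assume "mu k \<notin> nu ` {..<K2}"
    then have "{k'\<in>{..<K2}. nu k' = mu k} = {}" by (force simp: image_iff)
    then have "B (mu k) = 0" unfolding B_def by (simp only: sum.empty)
    moreover have "d (mu k) = 0" using d0 that unfolding S'_def by auto
    ultimately show False using Amu[OF that] apos[OF that] unfolding d_def by simp
  qed
  have sub2: "nu k \<in> mu ` {..<K1}" if "k < K2" for k
  proof (rule ccontr)
    assume "nu k \<notin> mu ` {..<K1}"
    then have "{k'\<in>{..<K1}. mu k' = nu k} = {}" by (force simp: image_iff)
    then have "A (nu k) = 0" unfolding A_def by (simp only: sum.empty)
    moreover have "d (nu k) = 0" using d0 that unfolding S'_def by auto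
    ultimately show False using Bnu[OF that] bpos[OF that] Cpos unfolding d_def by simp
  qed
  have "mu ` {..<K1} = nu ` {..<K2}" using sub1 sub2 by auto
  then have KM: "K1 = K2 \<and> (\<forall>k<K1. mu k = nu k)" using sorted_eq[OF mmono nmono] by blast
  have tC: "tau k = C * sigma k" if "k < K1" for k
  proof -
    have "d (mu k) = 0" using d0 that unfolding S'_def by auto
    then have "a k = C * b k" using Amu[OF that] Bnu[of k] KM that unfolding d_def by simp
    then show ?thesis using KM that unfolding a_def b_def by simp
  qed
  have "1 = (\<Sum>k<K1. C * sigma k)" using tsum tC by simp
  also have "\<dots> = C" using ssum KM by (simp add: sum_distrib_left[symmetric])
  finally have "C = 1" by simp
  then show ?thesis using KM tC by simp
qed

end
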